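(* Let $d$ be an odd prime, with $\omega$, $D_{\mathbf p}$, $\Pi^j_k$ and $\Omega$ as in the context. If $|\phi\rangle\in\mathbb{C}^d$ is a fiducial vector, then $|\phi\rangle\langle\phi|\in\Omega$. That is, there exist real numbers $\alpha^j_r$ ($j=0,\dots,d$, $r=1,\dots,d-1$) with $\alpha^j_{d-r}=-\alpha^j_r$ such that $\langle\phi|\Pi^j_k|\phi\rangle=\frac1d+\frac{1}{d\sqrt{d+1}}\sum_{r=1}^{d-1}\omega^{\alpha^j_r+kr}$ for all $j,k$, and $|\phi\rangle\langle\phi|=\sum_{j=0}^{d}\sum_{k=0}^{d-1}\big(\langle\phi|\Pi^j_k|\phi\rangle-\tfrac{1}{d+1}\big)\Pi^j_k$.
   Context: Let $d$ be an odd prime and $\omega=e^{2\pi i/d}$; for real $x$, $\omega^{x}$ means $e^{2\pi i x/d}$. Let $\{|k\rangle\}_{k=0}^{d-1}$ be the computational basis of $\mathbb{C}^d$, with indices taken modulo $d$. Let $X|k\rangle=|k+1\rangle$ and $Z|k\rangle=\omega^k|k\rangle$, and $\tau=-e^{i\pi/d}$. For $\mathbf p=(p_1,p_2)\in\mathbb{Z}_d^2$ the displacement operator is $D_{\mathbf p}=\tau^{p_1p_2}X^{p_1}Z^{p_2}$. For $j\in\{0,\dots,d-1\}$ and $k\in\{0,\dots,d-1\}$, let $\Pi^j_k$ be the rank-one projector onto the eigenvector of $D_{(1,j)}$ with eigenvalue $\omega^k$ (each $D_{(1,j)}$ has nondegenerate spectrum $\{\omega^k\}$). Let $\Pi^d_k=|k\rangle\langle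 k|$, the eigenprojector of $Z$ with eigenvalue $\omega^k$. These $d+1$ bases are mutually unbiased. A unit vector $|\phi\rangle\in\mathbb{C}^d$ is called fiducial if $|\langle\phi|D_{\mathbf p}|\phi\rangle|^2=\frac{1}{d+1}$ for all $\mathbf p\in\mathbb{Z}_d^2\setminus\{(0,0)\}$; then $\{D_{\mathbf p}|\phi\rangle\}$ is a Weyl–Heisenberg covariant SIC-POVM. $\Omega$ denotes the set of all operators $\rho=\sum_{j=0}^{d}\sum_{k=0}^{d-1}\big(p^j_k-\tfrac{1}{d+1}\big)\Pi^j_k$ with $p^j_k=\frac1d+\frac{1}{d\sqrt{d+1}}\sum_{r=1}^{d-1}\omega^{\alpha^j_r+kr}$, where the $\alpha^j_r\in\mathbb{R}$ ($j=0,\dots,d$, $r=1,\dots,d-1$) satisfy $\alpha^j_{d-r}=-\alpha^j_r$. *)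

theory Defs
  imports Complex_Main "HOL-Computational_Algebra.Primes"
begin

text \<open>Conventions: vectors in C^d are functions nat => complex, only indices 0..d-1
  are meaningful; d x d matrices are functions nat => nat => complex, entries
  outside {0..<d} x {0..<d} are set to 0 by all constructions below.\<close>

type_synonym cvec = "nat \<Rightarrow> complex"
type_synonym cmat = "nat \<Rightarrow> nat \<Rightarrow> complex"

definition restr :: "nat \<Rightarrow> cmat \<Rightarrow> cmat" where
  "restr d A = (\<lambda>a b. if a < d \<and> b < d then A a b else 0)"

definition omega_pow :: "nat \<Rightarrow> real \<Rightarrow> complex" where
  "omega_pow d x = cis (2 * pi * x / real d)"

definition omega :: "nat \<Rightarrow> complex" where
  "omega d = omega_pow d 1"

definition tau :: "nat \<Rightarrow> complex" where
  "tau d = - cis (pi / real d)"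

definition mat_mult :: "nat \<Rightarrow> cmat \<Rightarrow> cmat \<Rightarrow> cmat" where
  "mat_mult d A B = restr d (\<lambda>a b. \<Sum>c<d. A a c * B c b)"

definition mat_id :: "nat \<Rightarrow> cmat" where
  "mat_id d = restr d (\<lambda>a b. if a = b then 1 else 0)"

fun mat_pow :: "nat \<Rightarrow> cmat \<Rightarrow> nat \<Rightarrow> cmat" where
  "mat_pow d A 0 = mat_id d"
| "mat_pow d A (Suc n) = mat_mult d A (mat_pow d A n)"

definition mat_scale :: "nat \<Rightarrow> complex \<Rightarrow> cmat \<Rightarrow> cmat" where
  "mat_scale d c A = restr d (\<lambda>a b. c * A a b)"

definition mat_vec :: "nat \<Rightarrow> cmat \<Rightarrow> cvec \<Rightarrow> cvec" where
  "mat_vec d A v = (\<lambda>a. \<Sum>b<d. A a b * v b)"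

definition shiftX :: "nat \<Rightarrow> cmat" where
  "shiftX d = restr d (\<lambda>a b. if a = (b + 1) mod d then 1 else 0)"

definition clockZ :: "nat \<Rightarrow> cmat" where
  "clockZ d = restr d (\<lambda>a b. if a = b then omega d ^ b else 0)"

definition displ :: "nat \<Rightarrow> nat \<Rightarrow> nat \<Rightarrow> cmat" where
  "displ d p1 p2 = mat_scale d (tau d ^ (p1 * p2))
      (mat_mult d (mat_pow d (shiftX d) p1) (mat_pow d (clockZ d) p2))"

definition inner :: "nat \<Rightarrow> cvec \<Rightarrow> cvec \<Rightarrow> complex" where
  "inner d u v = (\<Sum>a<d. cnj (u a) * v a)"

definition unit_vec :: "nat \<Rightarrow> cvec \<Rightarrow> bool" where
  "unit_vec d v \<longleftrightarrow> inner d v v = 1"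

definition outer :: "nat \<Rightarrow> cvec \<Rightarrow> cvec \<Rightarrow> cmat" where
  "outer d u v = restr d (\<lambda>a b. u a * cnj (v b))"

text \<open>The rank-one projector onto the (unique up to phase) eigenvector of A with eigenvalue lam\<close>
definition eigproj :: "nat \<Rightarrow> cmat \<Rightarrow> complex \<Rightarrow> cmat" where
  "eigproj d A lam = (THE P. \<exists>v. unit_vec d v \<and>
       (\<forall>a<d. mat_vec d A v a = lam * v a) \<and> P = outer d v v)"

definition Proj :: "nat \<Rightarrow> nat \<Rightarrow> nat \<Rightarrow> cmat" where
  "Proj d j k = (if j < d then eigproj d (displ d 1 j) (omega d ^ k)
                 else outer d (\<lambda>a. if a = k then 1 else 0) (\<lambda>a. if a = k then 1 else 0))"

definition fiducial :: "nat \<Rightarrow> cvec \<Rightarrow> bool" where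
  "fiducial d phi \<longleftrightarrow> unit_vec d phi \<and>
     (\<forall>p1<d. \<forall>p2<d. (p1, p2) \<noteq> (0, 0) \<longrightarrow>
        (cmod (inner d phi (mat_vec d (displ d p1 p2) phi)))\<^sup>2 = 1 / (real d + 1))"

end

theory Submission
  imports Defs "HOL-Library.Real_Mod"
begin

definition ee :: "nat \<Rightarrow> int \<Rightarrow> complex" where
  "ee d m = cis (2 * pi * of_int m / real d)"

lemma ee_add: "ee d (a + b) = ee d a * ee d b"
  unfolding ee_def by (simp add: cis_mult add_divide_distrib ring_distribs)

lemma ee_0[simp]: "ee d 0 = 1"
  unfolding ee_def by simp

lemma cnj_ee: "cnj (ee d a) = ee d (- a)"
  unfolding ee_def by (simp add: cis_cnj)

lemma ee_diff: "ee d (a - b) = ee d a * ee d (- b)"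
  using ee_add[of d a "-b"] by simp

lemma norm_ee[simp]: "norm (ee d a) = 1"
  unfolding ee_def by simp

lemma ee_nz[simp]: "ee d a \<noteq> 0"
  unfolding ee_def by simp

lemma ee_mul_cnj: "ee d a * cnj (ee d a) = 1"
  by (simp add: cnj_ee ee_add[symmetric])

lemma ee_multiple: "d > 0 \<Longrightarrow> ee d (int d * q) = 1"
  unfolding ee_def by (simp add: cis_eq_1_iff)

lemma ee_eqI: "d > 0 \<Longrightarrow> a - b = int d * q \<Longrightarrow> ee d a = ee d b"
proof -
  assume d: "d > 0" and h: "a - b = int d * q"
  have "a = b + int d * q" using h by simp
  then show ?thesis using ee_multiple[OF d] by (simp add: ee_add)
qed

lemma ee_eq_1_iff: "d > 0 \<Longrightarrow> ee d m = 1 \<longleftrightarrow> int d dvd m"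
proof
  assume d: "d > 0" and "ee d m = 1"
  then obtain n where "2 * pi * of_int m / real d = of_int n * (2 * pi)"
    unfolding ee_def cis_eq_1_iff by blast
  then have "real_of_int m = of_int n * real d" using d by (simp add: field_simps)
  then have "m = n * int d" by (metis of_int_eq_iff of_int_mult of_int_of_nat_eq)
  then show "int d dvd m" by simp
next
  assume "d > 0" "int d dvd m"
  then show "ee d m = 1" using ee_multiple by (auto elim!: dvdE)
qed

lemma ee_power: "ee d m ^ n = ee d (int n * m)"
  by (induction n) (simp_all add: ee_add distrib_right)

lemma char_sum:
  assumes "d > 0"
  shows "(\<Sum>k<d. ee d (int k * m)) = (if int d dvd m then of_nat d else 0)"
proof (cases "int d dvd m")
  case True
  then have "\<And>k. ee d (int k * m) = 1" using assms
    by (simp add: ee_eq_1_iff)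
  then show ?thesis using True by simp
next
  case False
  then have ne: "ee d m \<noteq> 1" using ee_eq_1_iff[OF assms] by simp
  have "(\<Sum>k<d. ee d (int k * m)) = (\<Sum>k<d. ee d m ^ k)" by (simp add: ee_power)
  also have "\<dots> = (ee d m ^ d - 1) / (ee d m - 1)" using ne by (rule geometric_sum)
  also have "ee d m ^ d = 1" using assms by (simp add: ee_power ee_multiple)
  finally show ?thesis using False by simp
qed

lemma omega_power: "omega d ^ n = ee d (int n)"
  unfolding omega_def omega_pow_def ee_def by (simp add: DeMoivre mult_ac)

lemma omega_pow_ee: "omega_pow d x = cis (2 * pi * x / real d)"
  unfolding omega_pow_def by simp

lemma tau_ee:
  assumes "odd d"
  shows "tau d = ee d ((int d + 1) div 2)"
proof -
  obtain m where m: "d = 2 * m + 1" using assms oddE by blast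
  have "real_of_int ((int d + 1) div 2) = real m + 1" using m by simp
  then have "ee d ((int d + 1) div 2) = cis (2 * pi * (real m + 1) / real d)"
    unfolding ee_def by simp
  also have "2 * pi * (real m + 1) / real d = pi + pi / real d"
    using m by (simp add: field_simps)
  finally show ?thesis unfolding tau_def by (simp add: cis_mult[symmetric])
qed


lemma shift_iff:
  fixes a b d :: nat
  assumes "a < d" "b < d" 
  shows "a = (b + 1) mod d \<longleftrightarrow> b = (a + d - 1) mod d"
proof
  assume h: "a = (b + 1) mod d"
  show "b = (a + d - 1) mod d"
  proof (cases "b + 1 < d")
    case True
    have "(b + 1) mod d = b + 1" using True by (rule mod_less)
    with h have "a = b + 1" by simp
    then have "a + d - 1 = b + d" by simp
    then have "(a + d - 1) mod d = b mod d" by (metis mod_add_self2)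
    then show ?thesis using assms by (metis mod_less)
  next
    case False
    then have "b = d - 1" "a = 0" using assms h by (auto, metis Suc_eq_plus1 Suc_lessI mod_self)
    then show ?thesis using assms by (metis add_0 diff_less less_nat_zero_code mod_less zero_less_one)
  qed
next
  assume h: "b = (a + d - 1) mod d"
  show "a = (b + 1) mod d"
  proof (cases "a = 0")
    case True
    then have "b = d - 1" using h assms by (metis add_0 diff_less less_nat_zero_code mod_less zero_less_one)
    then show ?thesis using True assms by (metis Suc_eq_plus1 Suc_pred' less_nat_zero_code mod_self not_gr_zero)
  next
    case False
    then have "a + d - 1 = (a - 1) + d" by simp
    then have "b = (a - 1) mod d" using h by (metis mod_add_self2)
    then have "b = a - 1" using assms by (metis less_imp_diff_less mod_less)
    then show ?thesis using False assms by (metis Suc_eq_plus1 Suc_pred' mod_less not_gr_zero)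
  qed
qed

lemma mat_pow_shiftX:
  assumes "d > 0"
  shows "mat_pow d (shiftX d) n a b = (if a < d \<and> b < d \<and> a = (b + n) mod d then 1 else 0)"
proof (induction n arbitrary: a b)
  case 0
  then show ?case by (simp add: mat_id_def restr_def)
next
  case (Suc n)
  have h: "(\<Sum>c<d. shiftX d a c * mat_pow d (shiftX d) n c b) = shiftX d a ((b + n) mod d)"
    if "b < d"
  proof -
    have "(\<Sum>c<d. shiftX d a c * mat_pow d (shiftX d) n c b) =
        (\<Sum>c<d. if c = (b + n) mod d then shiftX d a c else 0)"
      by (rule sum.cong) (auto simp: Suc that)
    also have "\<dots> = shiftX d a ((b + n) mod d)" using assms by (subst sum.delta) auto
    finally show ?thesis .
  qed
  have "mat_pow d (shiftX d) (Suc n) a b = (if a < d \<and> b < d then shiftX d a ((b + n) mod d) else 0)"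
    by (simp add: mat_mult_def restr_def h)
  then show ?case
    using assms by (auto simp: shiftX_def restr_def mod_Suc_eq)
qed

lemma mat_pow_clockZ:
  assumes "d > 0"
  shows "mat_pow d (clockZ d) n a b = (if a < d \<and> b < d \<and> a = b then ee d (int n * int b) else 0)"
proof (induction n arbitrary: a b)
  case 0
  then show ?case by (simp add: mat_id_def restr_def)
next
  case (Suc n)
  have h: "(\<Sum>c<d. clockZ d a c * mat_pow d (clockZ d) n c b) = clockZ d a a * mat_pow d (clockZ d) n a b"
    if "a < d"
  proof -
    have "(\<Sum>c<d. clockZ d a c * mat_pow d (clockZ d) n c b) =
        (\<Sum>c<d. if c = a then clockZ d a c * mat_pow d (clockZ d) n c b else 0)"
      by (rule sum.cong) (auto simp: clockZ_def restr_def)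
    also have "\<dots> = clockZ d a a * mat_pow d (clockZ d) n a b" using that by (subst sum.delta) auto
    finally show ?thesis .
  qed
  have "mat_pow d (clockZ d) (Suc n) a b = (if a < d \<and> b < d then clockZ d a a * mat_pow d (clockZ d) n a b else 0)"
    by (simp add: mat_mult_def restr_def h)
  also have "\<dots> = (if a < d \<and> b < d then clockZ d a a * (if a = b then ee d (int n * int b) else 0) else 0)"
    by (simp add: Suc.IH)
  finally show ?case
    using assms by (auto simp: clockZ_def restr_def omega_power ee_add[symmetric] distrib_right)
qed

lemma sum_delta_lt: "(m::nat) < d \<Longrightarrow> (\<Sum>a<d. if a = m then f a else 0) = f m"
  by (subst sum.delta) auto

definition tt :: "nat \<Rightarrow> int" where "tt d = (int d + 1) div 2"

lemma tt2: "odd d \<Longrightarrow> 2 * tt d = int d + 1"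
  unfolding tt_def by (metis odd_two_times_div_two_succ add.commute even_add even_of_nat odd_one
      dvd_mult_div_cancel even_succ_div_two of_nat_Suc  semiring_1_class.of_nat_simps(2))

lemma displ_entry:
  assumes "d > 0" "odd d"
  shows "displ d p1 p2 a b = (if a < d \<and> b < d \<and> a = (b + p1) mod d
       then ee d (tt d * int p1 * int p2 + int p2 * int b) else 0)"
proof -
  have h: "(\<Sum>c<d. mat_pow d (shiftX d) p1 a c * mat_pow d (clockZ d) p2 c b) =
     mat_pow d (shiftX d) p1 a b * mat_pow d (clockZ d) p2 b b" if "b < d"
  proof -
    have "(\<Sum>c<d. mat_pow d (shiftX d) p1 a c * mat_pow d (clockZ d) p2 c b) =
       (\<Sum>c<d. if c = b then mat_pow d (shiftX d) p1 a c * mat_pow d (clockZ d) p2 c b else 0)"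
      by (rule sum.cong) (auto simp: mat_pow_clockZ assms)
    also have "\<dots> = mat_pow d (shiftX d) p1 a b * mat_pow d (clockZ d) p2 b b"
      using that by (subst sum.delta) auto
    finally show ?thesis .
  qed
  have M: "mat_mult d (mat_pow d (shiftX d) p1) (mat_pow d (clockZ d) p2) a b =
     (if a < d \<and> b < d \<and> a = (b + p1) mod d then ee d (int p2 * int b) else 0)"
  proof (cases "a < d \<and> b < d")
    case True
    then have "mat_mult d (mat_pow d (shiftX d) p1) (mat_pow d (clockZ d) p2) a b =
       mat_pow d (shiftX d) p1 a b * mat_pow d (clockZ d) p2 b b"
      unfolding mat_mult_def restr_def using h by simp
    then show ?thesis using assms True by (simp add: mat_pow_shiftX mat_pow_clockZ)
  next
    case False
    then show ?thesis by (auto simp: mat_mult_def restr_def)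
  qed
  have T: "tau d ^ (p1 * p2) = ee d (tt d * int p1 * int p2)"
    using assms by (simp add: tau_ee tt_def ee_power mult_ac)
  have "displ d p1 p2 a b = (if a < d \<and> b < d then tau d ^ (p1 * p2) *
     mat_mult d (mat_pow d (shiftX d) p1) (mat_pow d (clockZ d) p2) a b else 0)"
    by (simp add: displ_def mat_scale_def restr_def)
  also have "\<dots> = (if a < d \<and> b < d \<and> a = (b + p1) mod d then
      ee d (tt d * int p1 * int p2) * ee d (int p2 * int b) else 0)"
    by (simp only: M T) auto
  finally show ?thesis by (simp add: ee_add)
qed

definition SS :: "nat \<Rightarrow> (nat \<Rightarrow> complex) \<Rightarrow> nat \<Rightarrow> nat \<Rightarrow> complex" where
  "SS d phi p1 p2 = (\<Sum>b<d. cnj (phi ((b + p1) mod d)) * ee d (int p2 * int b) * phi b)"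

lemma inner_displ:
  assumes "d > 0" "odd d" "p1 < d" "p2 < d"
  shows "inner d phi (mat_vec d (displ d p1 p2) phi) = ee d (tt d * int p1 * int p2) * SS d phi p1 p2"
proof -
  have "inner d phi (mat_vec d (displ d p1 p2) phi) =
     (\<Sum>a<d. \<Sum>b<d. cnj (phi a) * (displ d p1 p2 a b * phi b))"
    unfolding inner_def mat_vec_def by (simp add: sum_distrib_left)
  also have "\<dots> = (\<Sum>b<d. \<Sum>a<d. cnj (phi a) * (displ d p1 p2 a b * phi b))"
    by (rule sum.swap)
  also have "\<dots> = (\<Sum>b<d. \<Sum>a<d. if a = (b + p1) mod d then
        cnj (phi ((b + p1) mod d)) * (ee d (tt d * int p1 * int p2 + int p2 * int b) * phi b) else 0)"
    using assms by (intro sum.cong refl) (auto simp: displ_entry)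
  also have "\<dots> = (\<Sum>b<d. cnj (phi ((b + p1) mod d)) * (ee d (tt d * int p1 * int p2 + int p2 * int b) * phi b))"
    using assms by (intro sum.cong refl) (simp add: sum_delta_lt)
  also have "\<dots> = ee d (tt d * int p1 * int p2) * SS d phi p1 p2"
    unfolding SS_def by (simp add: sum_distrib_left ee_add mult_ac)
  finally show ?thesis .
qed


definition vv :: "nat \<Rightarrow> nat \<Rightarrow> nat \<Rightarrow> nat \<Rightarrow> complex" where
  "vv d j k z = ee d (int j * tt d * int z ^ 2 - int k * int z) / complex_of_real (sqrt (real d))"

lemma mv_displ1:
  assumes "d > 0" "odd d" "a < d"
  shows "mat_vec d (displ d 1 j) u a =
     ee d (tt d * int j + int j * int ((a + d - 1) mod d)) * u ((a + d - 1) mod d)"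
proof -
  let ?b = "(a + d - 1) mod d"
  have "mat_vec d (displ d 1 j) u a = (\<Sum>b<d. if b = ?b then ee d (tt d * int j + int j * int b) * u b else 0)"
    unfolding mat_vec_def
  proof (rule sum.cong)
    fix b assume "b \<in> {..<d}"
    then have b: "b < d" by simp
    have iff: "a = (b + 1) mod d \<longleftrightarrow> b = ?b" using shift_iff[OF assms(3) b] .
    show "displ d 1 j a b * u b = (if b = ?b then ee d (tt d * int j + int j * int b) * u b else 0)"
      unfolding displ_entry[OF assms(1,2)] using iff b assms(3) by auto
  qed simp
  also have "\<dots> = ee d (tt d * int j + int j * int ?b) * u ?b"
    using assms by (simp add: sum_delta_lt)
  finally show ?thesis .
qed

lemma vv_step:
  assumes "d > 0" "odd d" "b < d"
  shows "ee d (tt d * int j + int j * int b) * vv d j k b = ee d (int k) * vv d j k ((b + 1) mod d)"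
proof -
  define m where "m = (b + 1) mod d"
  define q0 where "q0 = (b + 1) div d"
  have mq: "int m = int b + 1 - int d * int q0"
  proof -
    have "(b + 1) div d * d + (b + 1) mod d = b + 1" by (rule div_mult_mod_eq)
    then have "int q0 * int d + int m = int b + 1" unfolding m_def q0_def
      by (metis of_nat_add of_nat_mult of_nat_1)
    then show ?thesis by (simp add: algebra_simps)
  qed
  have t2: "2 * tt d = int d + 1" using tt2 assms by simp
  have "ee d (tt d * int j + int j * int b) * ee d (int j * tt d * int b ^ 2 - int k * int b) =
     ee d (int k) * ee d (int j * tt d * int m ^ 2 - int k * int m)"
    unfolding ee_add[symmetric]
    by (rule ee_eqI[OF assms(1), where q = "- int j * int b + 2 * int j * tt d * (int b + 1) * int q0
           - int j * tt d * int d * int q0 ^ 2 - int k * int q0"])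
       (use mq t2 in algebra)
  then show ?thesis unfolding vv_def m_def by (simp add: mult_ac)
qed

lemma vv_eigen:
  assumes "d > 0" "odd d" "a < d"
  shows "mat_vec d (displ d 1 j) (vv d j k) a = omega d ^ k * vv d j k a"
proof -
  let ?b = "(a + d - 1) mod d"
  have b: "?b < d" using assms by simp
  have "a = (?b + 1) mod d" using shift_iff[OF assms(3) b] by simp
  then show ?thesis using mv_displ1[OF assms] vv_step[OF assms(1,2) b]
    by (simp add: omega_power)
qed

lemma cnj_mult_self: "cnj x * x = complex_of_real (norm x ^ 2)"
  using complex_norm_square[of x] by (simp add: mult.commute)

lemma norm_vv: "d > 0 \<Longrightarrow> norm (vv d j k z) ^ 2 = 1 / real d"
  unfolding vv_def by (simp add: norm_divide power_divide)

lemma vv_unit: "d > 0 \<Longrightarrow> unit_vec d (vv d j k)"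
  unfolding unit_vec_def inner_def by (simp add: cnj_mult_self norm_vv)

lemma vv_nz: "d > 0 \<Longrightarrow> vv d j k z \<noteq> 0"
  unfolding vv_def by simp

lemma eig_unique:
  assumes "d > 0" "odd d" "unit_vec d w"
    and eig: "\<forall>a<d. mat_vec d (displ d 1 j) w a = omega d ^ k * w a"
  shows "outer d w w = outer d (vv d j k) (vv d j k)"
proof -
  have rec: "w (b + 1) = ee d (tt d * int j + int j * int b) / ee d (int k) * w b" if "b + 1 < d" for b
  proof -
    have "(b + 1 + d - 1) mod d = b" using that by simp
    then have "mat_vec d (displ d 1 j) w (b + 1) = ee d (tt d * int j + int j * int b) * w b"
      using mv_displ1[OF assms(1,2) that] by simp
    then show ?thesis using eig that by (simp add: omega_power field_simps)
  qed
  have recv: "vv d j k (b + 1) = ee d (tt d * int j + int j * int b) / ee d (int k) * vv d j k b" if "b + 1 < d" for b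
  proof -
    have "(b + 1) mod d = b + 1" using that by simp
    then show ?thesis using vv_step[OF assms(1,2), of b j k] that by (simp add: field_simps)
  qed
  have prp: "w b * vv d j k 0 = w 0 * vv d j k b" if "b < d" for b
    using that
  proof (induction b)
    case 0
    then show ?case by simp
  next
    case (Suc b)
    then show ?case using rec[of b] recv[of b] by simp
  qed
  define c where "c = w 0 / vv d j k 0"
  have wc: "w a = c * vv d j k a" if "a < d" for a
    using prp[OF that] vv_nz[OF assms(1)] unfolding c_def by (simp add: field_simps)
  have "1 = inner d w w" using assms(3) unfolding unit_vec_def by simp
  also have "\<dots> = (\<Sum>a<d. cnj c * c * (cnj (vv d j k a) * vv d j k a))"
    unfolding inner_def by (rule sum.cong) (simp_all add: wc mult_ac)
  also have "\<dots> = cnj c * c * inner d (vv d j k) (vv d j k)"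
    unfolding inner_def by (simp add: sum_distrib_left)
  also have "\<dots> = cnj c * c" using vv_unit[OF assms(1)] unfolding unit_vec_def by simp
  finally have cc: "cnj c * c = 1" by simp
  show ?thesis
  proof (intro ext)
    fix a b
    show "outer d w w a b = outer d (vv d j k) (vv d j k) a b"
    proof (cases "a < d \<and> b < d")
      case True
      then have "w a * cnj (w b) = (cnj c * c) * (vv d j k a * cnj (vv d j k b))"
        by (simp add: wc mult_ac)
      then show ?thesis using True cc by (simp add: outer_def restr_def)
    qed (auto simp: outer_def restr_def)
  qed
qed

lemma Proj_vv:
  assumes "d > 0" "odd d" "j < d"
  shows "Proj d j k = outer d (vv d j k) (vv d j k)"
proof -
  have "eigproj d (displ d 1 j) (omega d ^ k) = outer d (vv d j k) (vv d j k)"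
    unfolding eigproj_def
  proof (rule the_equality)
    show "\<exists>v. unit_vec d v \<and> (\<forall>a<d. mat_vec d (displ d 1 j) v a = omega d ^ k * v a) \<and>
        outer d (vv d j k) (vv d j k) = outer d v v"
      using vv_unit[OF assms(1)] vv_eigen[OF assms(1,2)] by blast
  next
    fix P
    assume "\<exists>v. unit_vec d v \<and> (\<forall>a<d. mat_vec d (displ d 1 j) v a = omega d ^ k * v a) \<and> P = outer d v v"
    then show "P = outer d (vv d j k) (vv d j k)" using eig_unique[OF assms(1,2)] by blast
  qed
  then show ?thesis using assms unfolding Proj_def by simp
qed

lemma Proj_entry:
  assumes "d > 0" "odd d" "j < d"
  shows "Proj d j k a b = (if a < d \<and> b < d then
     ee d (int j * tt d * (int a ^ 2 - int b ^ 2) - int k * (int a - int b)) / of_nat d else 0)"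
proof -
  have s: "complex_of_real (sqrt (real d)) * complex_of_real (sqrt (real d)) = of_nat d"
  proof -
    have "sqrt (real d) * sqrt (real d) = real d" by simp
    then have "complex_of_real (sqrt (real d) * sqrt (real d)) = complex_of_real (real d)" by simp
    then show ?thesis by (simp only: of_real_mult of_real_of_nat_eq)
  qed
  have "vv d j k a * cnj (vv d j k b) = ee d (int j * tt d * int a ^ 2 - int k * int a) *
      ee d (- (int j * tt d * int b ^ 2 - int k * int b)) / of_nat d"
    unfolding vv_def by (simp add: cnj_ee s)
  also have "\<dots> = ee d (int j * tt d * (int a ^ 2 - int b ^ 2) - int k * (int a - int b)) / of_nat d"
    by (simp add: ee_add[symmetric] algebra_simps)
  finally show ?thesis using Proj_vv[OF assms] by (simp add: outer_def restr_def)
qed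


definition pp :: "nat \<Rightarrow> (nat \<Rightarrow> complex) \<Rightarrow> nat \<Rightarrow> nat \<Rightarrow> complex" where
  "pp d phi j k = inner d phi (mat_vec d (Proj d j k) phi)"

definition WW :: "nat \<Rightarrow> (nat \<Rightarrow> complex) \<Rightarrow> nat \<Rightarrow> nat \<Rightarrow> complex" where
  "WW d phi j r = (\<Sum>k<d. ee d (int k * int r) * pp d phi j k)"

lemma pp_lt:
  assumes "d > 0" "odd d" "j < d"
  shows "pp d phi j k = (\<Sum>a<d. \<Sum>b<d. cnj (phi a) * phi b *
      ee d (int j * tt d * (int a ^ 2 - int b ^ 2) - int k * (int a - int b))) / of_nat d"
  unfolding pp_def inner_def mat_vec_def
  by (simp add: Proj_entry[OF assms] sum_distrib_left sum_divide_distrib mult_ac)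

lemma pp_d:
  assumes "k < d"
  shows "pp d phi d k = cnj (phi k) * phi k"
proof -
  have "pp d phi d k = (\<Sum>a<d. cnj (phi a) * (\<Sum>b<d. (if b = k then (if a = k then 1 else 0) * phi b else 0)))"
    unfolding pp_def inner_def mat_vec_def Proj_def
    by (intro sum.cong refl arg_cong2[where f="(*)"]) (auto simp: outer_def restr_def)
  also have "\<dots> = (\<Sum>a<d. if a = k then cnj (phi a) * phi k else 0)"
    using assms by (intro sum.cong refl) (simp add: sum_delta_lt)
  also have "\<dots> = cnj (phi k) * phi k" using assms by (simp add: sum_delta_lt)
  finally show ?thesis .
qed

lemma dvd_iff_mod:
  assumes "a < d" "b < d" "r < d"
  shows "int d dvd (int r - int a + int b) \<longleftrightarrow> a = (b + r) mod d"
proof -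
  have "int d dvd (int r - int a + int b) \<longleftrightarrow> int d dvd ((int b + int r) - int a)"
    by (simp add: algebra_simps)
  also have "\<dots> \<longleftrightarrow> (int b + int r) mod int d = int a mod int d"
    by (simp add: mod_eq_dvd_iff)
  also have "\<dots> \<longleftrightarrow> int ((b + r) mod d) = int a"
    using assms by (simp add: zmod_int)
  finally show ?thesis by auto
qed

lemma inversion:
  assumes "d > 0" "k < d"
  shows "p k = (\<Sum>r<d. ee d (- (int k * int r)) * (\<Sum>k'<d. ee d (int k' * int r) * p k')) / of_nat d"
proof -
  have "(\<Sum>r<d. ee d (- (int k * int r)) * (\<Sum>k'<d. ee d (int k' * int r) * p k')) =
      (\<Sum>k'<d. p k' * (\<Sum>r<d. ee d (int r * (int k' - int k))))"
  proof -
    have "(\<Sum>r<d. ee d (- (int k * int r)) * (\<Sum>k'<d. ee d (int k' * int r) * p k')) =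
       (\<Sum>r<d. \<Sum>k'<d. ee d (- (int k * int r)) * (ee d (int k' * int r) * p k'))"
      by (simp add: sum_distrib_left)
    also have "\<dots> = (\<Sum>k'<d. \<Sum>r<d. ee d (- (int k * int r)) * (ee d (int k' * int r) * p k'))"
      by (rule sum.swap)
    also have "\<dots> = (\<Sum>k'<d. \<Sum>r<d. p k' * ee d (int r * (int k' - int k)))"
    proof (intro sum.cong refl)
      fix k' r
      have "ee d (int r * (int k' - int k)) = ee d (- (int k * int r)) * ee d (int k' * int r)"
        unfolding ee_add[symmetric] by (simp add: algebra_simps)
      then show "ee d (- (int k * int r)) * (ee d (int k' * int r) * p k') = p k' * ee d (int r * (int k' - int k))"
        by simp
    qed
    finally show ?thesis by (simp add: sum_distrib_left)
  qed
  also have "\<dots> = (\<Sum>k'<d. if k' = k then p k' * of_nat d else 0)"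
  proof (rule sum.cong)
    fix k' assume "k' \<in> {..<d}"
    then have "k' < d" by simp
    have "int d dvd (int k' - int k) \<longleftrightarrow> k' = k"
    proof
      assume "int d dvd (int k' - int k)"
      then have "(int k') mod int d = int k mod int d" by (simp add: mod_eq_dvd_iff)
      then show "k' = k" using \<open>k' < d\<close> assms by simp
    qed simp
    then show "p k' * (\<Sum>r<d. ee d (int r * (int k' - int k))) = (if k' = k then p k' * of_nat d else 0)"
      by (simp add: char_sum[OF assms(1)])
  qed simp
  also have "\<dots> = p k * of_nat d" using assms by (simp add: sum_delta_lt)
  finally show ?thesis using assms by simp
qed


lemma int_mod_decomp: "int (x mod d) = int x - int d * int (x div d)"
proof -
  have "x div d * d + x mod d = x" by (rule div_mult_mod_eq)
  then have "int (x div d) * int d + int (x mod d) = int x"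
    by (metis of_nat_add of_nat_mult)
  then show ?thesis by (simp add: algebra_simps)
qed

lemma ee_phase_lt:
  assumes "d > 0" "odd d"
  shows "ee d (int j * tt d * (int ((b + r) mod d) ^ 2 - int b ^ 2)) =
     ee d (int j * tt d * int r ^ 2) * ee d (int ((j * r) mod d) * int b)"
proof -
  define q1 where "q1 = int ((b + r) div d)"
  define q2 where "q2 = int ((j * r) div d)"
  have m: "int ((b + r) mod d) = int b + int r - int d * q1"
    unfolding q1_def by (simp add: int_mod_decomp)
  have s: "int ((j * r) mod d) = int j * int r - int d * q2"
    unfolding q2_def by (simp add: int_mod_decomp)
  have t2: "2 * tt d = int d + 1" using tt2 assms by simp
  show ?thesis unfolding ee_add[symmetric]
    by (rule ee_eqI[OF assms(1), where q = "int j * int r * int b - 2 * int j * tt d * (int b + int r) * q1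
           + int j * tt d * int d * q1 ^ 2 + q2 * int b"])
       (use m s t2 in algebra)
qed

lemma WW_lt:
  assumes "d > 0" "odd d" "j < d" "r < d"
  shows "WW d phi j r = ee d (int j * tt d * int r ^ 2) * SS d phi r ((j * r) mod d)"
proof -
  define F where "F a b = cnj (phi a) * phi b * ee d (int j * tt d * (int a ^ 2 - int b ^ 2))" for a b
  have pk: "pp d phi j k = (\<Sum>a<d. \<Sum>b<d. F a b * ee d (- (int k * (int a - int b)))) / of_nat d" for k
    unfolding pp_lt[OF assms(1-3)] F_def
    by (simp add: ee_diff mult_ac)
  have "WW d phi j r = (\<Sum>k<d. \<Sum>a<d. \<Sum>b<d. F a b * (ee d (int k * int r) * ee d (- (int k * (int a - int b))))) / of_nat d"
    unfolding WW_def pk by (simp add: sum_distrib_left sum_divide_distrib mult_ac)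
  also have "\<dots> = (\<Sum>a<d. \<Sum>k<d. \<Sum>b<d. F a b * (ee d (int k * int r) * ee d (- (int k * (int a - int b))))) / of_nat d"
    by (subst sum.swap) (rule refl)
  also have "\<dots> = (\<Sum>a<d. \<Sum>b<d. \<Sum>k<d. F a b * (ee d (int k * int r) * ee d (- (int k * (int a - int b))))) / of_nat d"
    by (subst (2) sum.swap) (rule refl)
  also have "\<dots> = (\<Sum>a<d. \<Sum>b<d. F a b * (\<Sum>k<d. ee d (int k * (int r - int a + int b)))) / of_nat d"
    by (simp add: sum_distrib_left ee_add[symmetric] algebra_simps)
  also have "\<dots> = (\<Sum>a<d. \<Sum>b<d. if a = (b + r) mod d then F a b else 0)"
  proof -
    have "(\<Sum>a<d. \<Sum>b<d. F a b * (\<Sum>k<d. ee d (int k * (int r - int a + int b)))) =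
       (\<Sum>a<d. \<Sum>b<d. (if a = (b + r) mod d then F a b else 0) * of_nat d)"
    proof (intro sum.cong refl)
      fix a b assume "a \<in> {..<d}" "b \<in> {..<d}"
      then show "F a b * (\<Sum>k<d. ee d (int k * (int r - int a + int b))) =
           (if a = (b + r) mod d then F a b else 0) * of_nat d"
        using dvd_iff_mod[of a d b r] assms by (simp add: char_sum)
    qed
    then show ?thesis using assms by (simp add: sum_distrib_right[symmetric])
  qed
  also have "\<dots> = (\<Sum>b<d. \<Sum>a<d. if a = (b + r) mod d then F a b else 0)"
    by (rule sum.swap)
  also have "\<dots> = (\<Sum>b<d. F ((b + r) mod d) b)"
    using assms by (intro sum.cong refl) (simp add: sum_delta_lt)
  also have "\<dots> = ee d (int j * tt d * int r ^ 2) * SS d phi r ((j * r) mod d)"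
    unfolding SS_def F_def ee_phase_lt[OF assms(1,2)] by (simp add: sum_distrib_left mult_ac)
  finally show ?thesis .
qed

lemma WW_d:
  assumes "r < d"
  shows "WW d phi d r = SS d phi 0 r"
  unfolding WW_def SS_def by (intro sum.cong refl) (simp add: pp_d mult_ac)

lemma pp_real:
  assumes "d > 0" "odd d" "j \<le> d" "k < d"
  shows "cnj (pp d phi j k) = pp d phi j k"
proof (cases "j = d")
  case True
  then show ?thesis using assms by (simp add: pp_d mult.commute)
next
  case False
  then have j: "j < d" using assms by simp
  define G where "G a b = cnj (phi a) * phi b *
      ee d (int j * tt d * (int a ^ 2 - int b ^ 2) - int k * (int a - int b))" for a b
  have G: "cnj (G a b) = G b a" for a b
    unfolding G_def by (simp add: cnj_ee algebra_simps)
  have "cnj (\<Sum>a<d. \<Sum>b<d. G a b) = (\<Sum>a<d. \<Sum>b<d. G b a)"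
    by (simp add: G)
  also have "\<dots> = (\<Sum>a<d. \<Sum>b<d. G a b)" by (rule sum.swap)
  finally show ?thesis
    unfolding pp_lt[OF assms(1,2) j] G_def[symmetric] by simp
qed

lemma WW_cnj:
  assumes "d > 0" "odd d" "j \<le> d" "r \<le> d"
  shows "cnj (WW d phi j r) = WW d phi j (d - r)"
  unfolding WW_def
proof (simp, intro sum.cong refl)
  fix k assume "k \<in> {..<d}"
  then have k: "k < d" by simp
  have "ee d (- (int k * int r)) = ee d (int k * int (d - r))"
    by (rule ee_eqI[OF assms(1), where q = "- int k"]) (use assms in \<open>simp add: of_nat_diff algebra_simps\<close>)
  then show "cnj (ee d (int k * int r)) * cnj (pp d phi j k) = ee d (int k * int (d - r)) * pp d phi j k"
    using pp_real[OF assms(1-3) k] by (simp add: cnj_ee)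
qed

lemma SS00:
  assumes "unit_vec d phi"
  shows "SS d phi 0 0 = 1"
  using assms unfolding unit_vec_def inner_def SS_def by simp

lemma WW_0:
  assumes "d > 0" "odd d" "j \<le> d" "unit_vec d phi"
  shows "WW d phi j 0 = 1"
proof (cases "j = d")
  case True
  then show ?thesis using assms by (simp add: WW_d SS00)
next
  case False
  then show ?thesis using assms by (simp add: WW_lt SS00)
qed

lemma WW_norm:
  assumes "d > 0" "odd d" "j \<le> d" "fiducial d phi" "1 \<le> r" "r < d"
  shows "(cmod (WW d phi j r))^2 = 1 / (real d + 1)"
proof -
  have key: "(cmod (SS d phi r s))^2 = 1 / (real d + 1)" if "r < d" "s < d" "(r, s) \<noteq> (0, 0)" for r s
  proof -
    have "(cmod (inner d phi (mat_vec d (displ d r s) phi)))^2 = 1 / (real d + 1)"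
      using assms(4) that unfolding fiducial_def by blast
    moreover have "cmod (inner d phi (mat_vec d (displ d r s) phi)) = cmod (SS d phi r s)"
      using inner_displ[OF assms(1,2) that(1,2), of phi] by (simp add: norm_mult)
    ultimately show ?thesis by simp
  qed
  show ?thesis
  proof (cases "j = d")
    case True
    then show ?thesis using assms key[of 0 r] by (simp add: WW_d)
  next
    case False
    then have "j < d" using assms by simp
    then show ?thesis using assms key[of r "(j * r) mod d"] by (simp add: WW_lt norm_mult)
  qed
qed


lemma cis_Arg_unit: "cmod z = 1 \<Longrightarrow> cis (Arg z) = z"
  by (metis cis_Arg norm_zero sgn_eq zero_neq_one div_by_1 of_real_1)

lemma part2_abstract:
  fixes p :: "nat \<Rightarrow> complex" and d :: nat
  defines "W \<equiv> (\<lambda>r. \<Sum>k<d. ee d (int k * int r) * p k)"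
  assumes d: "d > 0" "odd d"
    and W0: "W 0 = 1"
    and Wn: "\<And>r. 1 \<le> r \<Longrightarrow> r < d \<Longrightarrow> (cmod (W r))^2 = 1 / (real d + 1)"
    and Wc: "\<And>r. r \<le> d \<Longrightarrow> cnj (W r) = W (d - r)"
  shows "\<exists>a :: nat \<Rightarrow> real. (\<forall>r\<in>{1..d-1}. a (d - r) = - a r) \<and>
     (\<forall>k<d. p k = 1 / real d + 1 / (real d * sqrt (real d + 1)) *
           (\<Sum>r=1..d-1. omega_pow d (a r + real k * real r)))"
proof -
  define s where "s = sqrt (real d + 1)"
  have s0: "s > 0" unfolding s_def by simp
  define u where "u r = W (d - r) * complex_of_real s" for r
  have nu: "cmod (u r) = 1" if "r \<in> {1..d-1}" for r
  proof -
    have "(cmod (W (d - r)))^2 = 1 / (real d + 1)" using that d by (intro Wn) auto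
    then have "cmod (W (d - r)) = 1 / s" unfolding s_def
      by (metis norm_ge_zero real_sqrt_divide real_sqrt_one real_sqrt_unique)
    then show ?thesis unfolding u_def using s0 by (simp add: norm_mult)
  qed
  define a where "a r = (if 2 * r < d then real d * Arg (u r) / (2 * pi)
      else - (real d * Arg (u (d - r)) / (2 * pi)))" for r
  have anti: "a (d - r) = - a r" if "r \<in> {1..d-1}" for r
  proof -
    have "2 * r \<noteq> d" using d by auto
    then show ?thesis using that unfolding a_def by auto
  qed
  have ca: "cis (2 * pi * a r / real d) = u r" if r: "r \<in> {1..d-1}" for r
  proof (cases "2 * r < d")
    case True
    then have "2 * pi * a r / real d = Arg (u r)" unfolding a_def using d by simp
    then show ?thesis using cis_Arg_unit[OF nu[OF r]] by simp
  next
    case False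
    then have "2 * pi * a r / real d = - Arg (u (d - r))" unfolding a_def using d by simp
    moreover have "d - r \<in> {1..d-1}" using r by auto
    ultimately have "cis (2 * pi * a r / real d) = cnj (u (d - r))"
      using cis_Arg_unit[OF nu[of "d - r"]] by (metis cis_cnj)
    also have "\<dots> = u r" unfolding u_def using r Wc[of r] by auto
    finally show ?thesis .
  qed
  have main: "p k = 1 / real d + 1 / (real d * sqrt (real d + 1)) *
           (\<Sum>r=1..d-1. omega_pow d (a r + real k * real r))" if k: "k < d" for k
  proof -
    have "p k = (\<Sum>r<d. ee d (- (int k * int r)) * W r) / of_nat d"
      unfolding W_def by (rule inversion[OF d(1) k])
    also have "{..<d} = insert 0 {1..d-1}" using d by auto
    also have "(\<Sum>r\<in>insert 0 {1..d-1}. ee d (- (int k * int r)) * W r) =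
        1 + (\<Sum>r=1..d-1. ee d (- (int k * int r)) * W r)"
      by (subst sum.insert) (auto simp: W0)
    also have "(\<Sum>r=1..d-1. ee d (- (int k * int r)) * W r) =
        (\<Sum>r=1..d-1. ee d (- (int k * int (d - r))) * W (d - r))"
      by (subst sum.atLeastAtMost_rev) (intro sum.cong refl, use d in auto)
    also have "\<dots> = (\<Sum>r=1..d-1. omega_pow d (a r + real k * real r)) / complex_of_real s"
      unfolding sum_divide_distrib
    proof (intro sum.cong refl)
      fix r assume r: "r \<in> {1..d-1}"
      have rd: "int (d - r) = int d - int r" using r by auto
      have "ee d (- (int k * int (d - r))) = ee d (int k * int r)"
        by (rule ee_eqI[OF d(1), where q = "- int k"]) (simp add: rd algebra_simps)
      moreover have "omega_pow d (a r + real k * real r) = cis (2 * pi * a r / real d) * ee d (int k * int r)"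
        unfolding omega_pow_def ee_def by (simp add: cis_mult add_divide_distrib ring_distribs)
      ultimately show "ee d (- (int k * int (d - r))) * W (d - r) =
          omega_pow d (a r + real k * real r) / complex_of_real s"
        using ca[OF r] s0 unfolding u_def by simp
    qed
    finally show ?thesis using d unfolding s_def by (simp add: field_simps)
  qed
  show ?thesis using anti main by blast
qed


lemma dvd_diff_eq:
  assumes "a < d" "b < d" "int d dvd (int a - int b)"
  shows "a = b"
proof -
  have "int a mod int d = int b mod int d" using assms(3) by (simp add: mod_eq_dvd_iff)
  then show ?thesis using assms(1,2) by simp
qed

lemma NT:
  assumes "prime d" "odd d" "a < d" "b < d" "x < d" "y < d"
  shows "(int d dvd (int x - int y + int a - int b) \<and>
          int d dvd (tt d * (int x ^ 2 - int y ^ 2 + int a ^ 2 - int b ^ 2)))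
     \<longleftrightarrow> ((x = b \<and> y = a) \<or> (a = b \<and> x = y))"
proof
  assume h: "int d dvd (int x - int y + int a - int b) \<and>
          int d dvd (tt d * (int x ^ 2 - int y ^ 2 + int a ^ 2 - int b ^ 2))"
  obtain q where q: "int x - int y + int a - int b = int d * q" using h by (auto elim: dvdE)
  obtain q' where q': "tt d * (int x ^ 2 - int y ^ 2 + int a ^ 2 - int b ^ 2) = int d * q'"
    using h by (auto elim: dvdE)
  have t2: "2 * tt d = int d + 1" using tt2 assms by simp
  have yq: "int y = int x + int a - int b - int d * q" using q by simp
  have "(int a - int b) * (int b - int x) =
     int d * (q' - (int a - int b) * (int b - int x)
        - tt d * (2 * (int x + int a - int b) * q - int d * q ^ 2))"
    using yq q' t2 by algebra
  then have "int d dvd (int a - int b) * (int b - int x)" by (rule dvdI)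
  moreover have "prime (int d)" using assms by simp
  ultimately have "int d dvd (int a - int b) \<or> int d dvd (int b - int x)"
    using prime_dvd_mult_iff by blast
  then show "(x = b \<and> y = a) \<or> (a = b \<and> x = y)"
  proof
    assume "int d dvd (int a - int b)"
    then have ab: "a = b" using dvd_diff_eq assms by blast
    then have "int d dvd (int x - int y)" using h by simp
    then have "x = y" using dvd_diff_eq assms by blast
    then show ?thesis using ab by simp
  next
    assume "int d dvd (int b - int x)"
    then have xb: "x = b" using dvd_diff_eq assms by blast
    then have "int d dvd (int a - int y)" using h by simp
    then have "a = y" using dvd_diff_eq assms by blast
    then show ?thesis using xb by simp
  qed
next
  assume "(x = b \<and> y = a) \<or> (a = b \<and> x = y)"
  then show "int d dvd (int x - int y + int a - int b) \<and>
          int d dvd (tt d * (int x ^ 2 - int y ^ 2 + int a ^ 2 - int b ^ 2))"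
    by auto
qed

lemma swap3: "(\<Sum>k<(n::nat). \<Sum>x<m. \<Sum>y<l. f k x y) = (\<Sum>x<m. \<Sum>y<l. \<Sum>k<n. f k x y)"
proof -
  have "(\<Sum>k<n. \<Sum>x<m. \<Sum>y<l. f k x y) = (\<Sum>x<m. \<Sum>k<n. \<Sum>y<l. f k x y)"
    by (rule sum.swap)
  also have "\<dots> = (\<Sum>x<m. \<Sum>y<l. \<Sum>k<n. f k x y)"
    by (intro sum.cong refl) (rule sum.swap)
  finally show ?thesis .
qed

definition QQ :: "nat \<Rightarrow> nat \<Rightarrow> nat \<Rightarrow> nat \<Rightarrow> int" where
  "QQ a b x y = int x ^ 2 - int y ^ 2 + int a ^ 2 - int b ^ 2"

context
  fixes d :: nat and phi :: "nat \<Rightarrow> complex"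
  assumes d: "prime d" "odd d"
begin

lemma dpos: "d > 0" using d prime_gt_0_nat by blast

lemma sumk_Proj:
  assumes "j \<le> d" "a < d" "b < d"
  shows "(\<Sum>k<d. Proj d j k a b) = (if a = b then 1 else 0)"
proof (cases "j = d")
  case True
  have "(\<Sum>k<d. Proj d j k a b) = (\<Sum>k<d. if k = a then (if b = a then 1 else 0) else 0)"
    using True by (intro sum.cong refl) (auto simp: Proj_def outer_def restr_def)
  then show ?thesis using assms by (simp add: sum_delta_lt)
next
  case False
  then have j: "j < d" using assms by simp
  have "(\<Sum>k<d. Proj d j k a b) = (\<Sum>k<d. ee d (int j * tt d * (int a ^ 2 - int b ^ 2)) *
      ee d (int k * (int b - int a))) / of_nat d"
    using assms unfolding Proj_entry[OF dpos d(2) j] sum_divide_distrib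
    by (intro sum.cong refl) (simp add: ee_add[symmetric] algebra_simps)
  also have "\<dots> = ee d (int j * tt d * (int a ^ 2 - int b ^ 2)) *
      (if int d dvd (int b - int a) then of_nat d else 0) / of_nat d"
    by (simp add: sum_distrib_left[symmetric] char_sum[OF dpos])
  also have "\<dots> = (if a = b then 1 else 0)"
    using dvd_diff_eq[of b d a] assms dpos by auto
  finally show ?thesis .
qed

lemma sumk_pp_Proj:
  assumes "j < d" "a < d" "b < d"
  shows "(\<Sum>k<d. pp d phi j k * Proj d j k a b) =
     (\<Sum>x<d. \<Sum>y<d. cnj (phi x) * phi y * ee d (int j * (tt d * QQ a b x y)) *
        (if int d dvd (int x - int y + int a - int b) then 1 else 0)) / of_nat d"
proof -
  have pk: "pp d phi j k * Proj d j k a b =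
    (\<Sum>x<d. \<Sum>y<d. cnj (phi x) * phi y * ee d (int j * (tt d * QQ a b x y)) *
        ee d (int k * (- (int x - int y + int a - int b))) / (of_nat d * of_nat d))" for k
  proof -
    have "pp d phi j k * Proj d j k a b =
      (\<Sum>x<d. \<Sum>y<d. cnj (phi x) * phi y *
        ee d (int j * tt d * (int x ^ 2 - int y ^ 2) - int k * (int x - int y))) / of_nat d *
      (ee d (int j * tt d * (int a ^ 2 - int b ^ 2) - int k * (int a - int b)) / of_nat d)"
      unfolding pp_lt[OF dpos d(2) assms(1)] Proj_entry[OF dpos d(2) assms(1)] using assms by simp
    also have "\<dots> = (\<Sum>x<d. \<Sum>y<d. cnj (phi x) * phi y *
        ee d (int j * tt d * (int x ^ 2 - int y ^ 2) - int k * (int x - int y)) *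
        ee d (int j * tt d * (int a ^ 2 - int b ^ 2) - int k * (int a - int b)) / (of_nat d * of_nat d))"
      by (simp add: sum_distrib_right sum_divide_distrib)
    also have "\<dots> = (\<Sum>x<d. \<Sum>y<d. cnj (phi x) * phi y * ee d (int j * (tt d * QQ a b x y)) *
        ee d (int k * (- (int x - int y + int a - int b))) / (of_nat d * of_nat d))"
    proof (intro sum.cong refl)
      fix x y
      have "ee d (int j * tt d * (int x ^ 2 - int y ^ 2) - int k * (int x - int y)) *
        ee d (int j * tt d * (int a ^ 2 - int b ^ 2) - int k * (int a - int b)) =
        ee d (int j * (tt d * QQ a b x y)) * ee d (int k * (- (int x - int y + int a - int b)))"
        unfolding ee_add[symmetric] QQ_def by (simp add: algebra_simps)
      then show "cnj (phi x) * phi y *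
        ee d (int j * tt d * (int x ^ 2 - int y ^ 2) - int k * (int x - int y)) *
        ee d (int j * tt d * (int a ^ 2 - int b ^ 2) - int k * (int a - int b)) / (of_nat d * of_nat d) =
        cnj (phi x) * phi y * ee d (int j * (tt d * QQ a b x y)) *
        ee d (int k * (- (int x - int y + int a - int b))) / (of_nat d * of_nat d)"
        by (simp add: mult.assoc)
    qed
    finally show ?thesis .
  qed
  have "(\<Sum>k<d. pp d phi j k * Proj d j k a b) =
    (\<Sum>k<d. \<Sum>x<d. \<Sum>y<d. cnj (phi x) * phi y * ee d (int j * (tt d * QQ a b x y)) *
        ee d (int k * (- (int x - int y + int a - int b))) / (of_nat d * of_nat d))"
    by (simp only: pk)
  also have "\<dots> = (\<Sum>x<d. \<Sum>y<d. \<Sum>k<d. cnj (phi x) * phi y * ee d (int j * (tt d * QQ a b x y)) *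
        ee d (int k * (- (int x - int y + int a - int b))) / (of_nat d * of_nat d))"
    by (rule swap3)
  also have "\<dots> = (\<Sum>x<d. \<Sum>y<d. cnj (phi x) * phi y * ee d (int j * (tt d * QQ a b x y)) *
        (if int d dvd (int x - int y + int a - int b) then 1 else 0) / of_nat d)"
  proof (intro sum.cong refl)
    fix x y
    show "(\<Sum>k<d. cnj (phi x) * phi y * ee d (int j * (tt d * QQ a b x y)) *
        ee d (int k * (- (int x - int y + int a - int b))) / (of_nat d * of_nat d)) =
       cnj (phi x) * phi y * ee d (int j * (tt d * QQ a b x y)) *
        (if int d dvd (int x - int y + int a - int b) then 1 else 0) / of_nat d"
      using dpos dvd_minus_iff[of "int d" "int x - int y + int a - int b"]
      by (simp add: sum_divide_distrib[symmetric] sum_distrib_left[symmetric] char_sum[OF dpos])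
  qed
  finally show ?thesis by (simp add: sum_divide_distrib)
qed

end


context
  fixes d :: nat and phi :: "nat \<Rightarrow> complex"
  assumes d: "prime d" "odd d"
begin

lemma sumj_pp_Proj:
  assumes "a < d" "b < d"
  shows "(\<Sum>j<d. \<Sum>k<d. pp d phi j k * Proj d j k a b) =
     (\<Sum>x<d. \<Sum>y<d. if (x = b \<and> y = a) \<or> (a = b \<and> x = y) then cnj (phi x) * phi y else 0)"
proof -
  have "(\<Sum>j<d. \<Sum>k<d. pp d phi j k * Proj d j k a b) =
     (\<Sum>j<d. \<Sum>x<d. \<Sum>y<d. cnj (phi x) * phi y * ee d (int j * (tt d * QQ a b x y)) *
        (if int d dvd (int x - int y + int a - int b) then 1 else 0) / of_nat d)"
    using assms by (simp add: sumk_pp_Proj[OF d] sum_divide_distrib)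
  also have "\<dots> = (\<Sum>x<d. \<Sum>y<d. \<Sum>j<d. cnj (phi x) * phi y * ee d (int j * (tt d * QQ a b x y)) *
        (if int d dvd (int x - int y + int a - int b) then 1 else 0) / of_nat d)"
    by (rule swap3)
  also have "\<dots> = (\<Sum>x<d. \<Sum>y<d. if (x = b \<and> y = a) \<or> (a = b \<and> x = y) then cnj (phi x) * phi y else 0)"
  proof (intro sum.cong refl)
    fix x y assume "x \<in> {..<d}" "y \<in> {..<d}"
    then have xy: "x < d" "y < d" by auto
    have "(\<Sum>j<d. cnj (phi x) * phi y * ee d (int j * (tt d * QQ a b x y)) *
        (if int d dvd (int x - int y + int a - int b) then 1 else 0) / of_nat d) =
       cnj (phi x) * phi y * (\<Sum>j<d. ee d (int j * (tt d * QQ a b x y))) *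
        (if int d dvd (int x - int y + int a - int b) then 1 else 0) / of_nat d"
      by (simp add: sum_distrib_left sum_distrib_right sum_divide_distrib mult_ac)
    also have "\<dots> = (if int d dvd (int x - int y + int a - int b) \<and> int d dvd (tt d * QQ a b x y)
         then cnj (phi x) * phi y else 0)"
      using dpos[OF d] by (simp add: char_sum[OF dpos[OF d]])
    also have "\<dots> = (if (x = b \<and> y = a) \<or> (a = b \<and> x = y) then cnj (phi x) * phi y else 0)"
    proof -
      have c: "(int d dvd (int x - int y + int a - int b) \<and> int d dvd (tt d * QQ a b x y)) \<longleftrightarrow>
          ((x = b \<and> y = a) \<or> (a = b \<and> x = y))"
        using NT[OF d assms xy] unfolding QQ_def .
      show ?thesis by (rule if_cong[OF c refl refl])
    qed
    finally show "(\<Sum>j<d. cnj (phi x) * phi y * ee d (int j * (tt d * QQ a b x y)) *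
        (if int d dvd (int x - int y + int a - int b) then 1 else 0) / of_nat d) =
       (if (x = b \<and> y = a) \<or> (a = b \<and> x = y) then cnj (phi x) * phi y else 0)" .
  qed
  finally show ?thesis .
qed

lemma eval_cond:
  assumes "a < d" "b < d" "unit_vec d phi"
  shows "(\<Sum>x<d. \<Sum>y<d. if (x = b \<and> y = a) \<or> (a = b \<and> x = y) then cnj (phi x) * phi y else 0)
     = (if a = b then 1 else cnj (phi b) * phi a)"
proof (cases "a = b")
  case True
  have "(\<Sum>x<d. \<Sum>y<d. if (x = b \<and> y = a) \<or> (a = b \<and> x = y) then cnj (phi x) * phi y else 0)
     = (\<Sum>x<d. \<Sum>y<d. if y = x then cnj (phi x) * phi y else 0)"
    using True by (intro sum.cong refl) auto
  also have "\<dots> = (\<Sum>x<d. cnj (phi x) * phi x)"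
    by (intro sum.cong refl) (simp add: sum_delta_lt)
  also have "\<dots> = 1" using assms(3) unfolding unit_vec_def inner_def by simp
  finally show ?thesis using True by simp
next
  case False
  have "(\<Sum>x<d. \<Sum>y<d. if (x = b \<and> y = a) \<or> (a = b \<and> x = y) then cnj (phi x) * phi y else 0)
     = (\<Sum>x<d. if x = b then (\<Sum>y<d. if y = a then cnj (phi x) * phi y else 0) else 0)"
    using False by (intro sum.cong refl) auto
  also have "\<dots> = cnj (phi b) * phi a" using assms by (simp add: sum_delta_lt)
  finally show ?thesis using False by simp
qed

lemma Proj_out:
  assumes "j \<le> d" "\<not> (a < d \<and> b < d)"
  shows "Proj d j k a b = 0"
proof (cases "j = d")
  case True
  then show ?thesis using assms by (auto simp: Proj_def outer_def restr_def)
next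
  case False
  then show ?thesis using assms Proj_entry[OF dpos[OF d] d(2), of j k a b] by auto
qed

end


theorem mainTheorem1:
  fixes d :: nat and phi :: "nat \<Rightarrow> complex"
  assumes "prime d" and "odd d"
    and "fiducial d phi"
  shows "\<exists>\<alpha> :: nat \<Rightarrow> nat \<Rightarrow> real.
     (\<forall>j\<le>d. \<forall>r\<in>{1..d-1}. \<alpha> j (d - r) = - \<alpha> j r) \<and>
     (\<forall>j\<le>d. \<forall>k<d. inner d phi (mat_vec d (Proj d j k) phi) =
         1 / real d + 1 / (real d * sqrt (real d + 1)) *
           (\<Sum>r=1..d-1. omega_pow d (\<alpha> j r + real k * real r))) \<and>
     outer d phi phi =
       (\<lambda>a b. \<Sum>j\<le>d. \<Sum>k<d.
          (inner d phi (mat_vec d (Proj d j k) phi) - 1 / (real d + 1)) * Proj d j k a b)"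
proof -
  note d = assms(1,2)
  have d0: "d > 0" using dpos[OF d] .
  have unit: "unit_vec d phi" using assms(3) unfolding fiducial_def by blast
  have ex: "\<forall>j\<in>{..d}. \<exists>a :: nat \<Rightarrow> real. (\<forall>r\<in>{1..d-1}. a (d - r) = - a r) \<and>
     (\<forall>k<d. pp d phi j k = 1 / real d + 1 / (real d * sqrt (real d + 1)) *
           (\<Sum>r=1..d-1. omega_pow d (a r + real k * real r)))"
  proof
    fix j assume "j \<in> {..d}"
    then have j: "j \<le> d" by simp
    show "\<exists>a :: nat \<Rightarrow> real. (\<forall>r\<in>{1..d-1}. a (d - r) = - a r) \<and>
     (\<forall>k<d. pp d phi j k = 1 / real d + 1 / (real d * sqrt (real d + 1)) *
           (\<Sum>r=1..d-1. omega_pow d (a r + real k * real r)))"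
    proof (rule part2_abstract[OF d0 d(2)])
      show "(\<Sum>k<d. ee d (int k * int 0) * pp d phi j k) = 1"
        using WW_0[OF d0 d(2) j unit] unfolding WW_def .
      show "(cmod (\<Sum>k<d. ee d (int k * int r) * pp d phi j k))\<^sup>2 = 1 / (real d + 1)"
        if "1 \<le> r" "r < d" for r
        using WW_norm[OF d0 d(2) j assms(3) that] unfolding WW_def .
      show "cnj (\<Sum>k<d. ee d (int k * int r) * pp d phi j k) = (\<Sum>k<d. ee d (int k * int (d - r)) * pp d phi j k)"
        if "r \<le> d" for r
        using WW_cnj[OF d0 d(2) j that] unfolding WW_def .
    qed
  qed
  then obtain \<alpha> where al: "\<forall>j\<in>{..d}. (\<forall>r\<in>{1..d-1}. \<alpha> j (d - r) = - \<alpha> j r) \<and>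
     (\<forall>k<d. pp d phi j k = 1 / real d + 1 / (real d * sqrt (real d + 1)) *
           (\<Sum>r=1..d-1. omega_pow d (\<alpha> j r + real k * real r)))"
    by (rule bchoice[elim_format]) blast
  have part3: "outer d phi phi =
       (\<lambda>a b. \<Sum>j\<le>d. \<Sum>k<d.
          (inner d phi (mat_vec d (Proj d j k) phi) - 1 / (real d + 1)) * Proj d j k a b)"
  proof (intro ext)
    fix a b
    show "outer d phi phi a b = (\<Sum>j\<le>d. \<Sum>k<d.
          (inner d phi (mat_vec d (Proj d j k) phi) - 1 / (real d + 1)) * Proj d j k a b)"
    proof (cases "a < d \<and> b < d")
      case False
      then show ?thesis using Proj_out[OF d] by (auto simp: outer_def restr_def)
    next
      case True
      then have a: "a < d" and b: "b < d" by auto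
      have "(\<Sum>j\<le>d. \<Sum>k<d. (inner d phi (mat_vec d (Proj d j k) phi) - 1 / (real d + 1)) * Proj d j k a b)
        = (\<Sum>j\<le>d. \<Sum>k<d. pp d phi j k * Proj d j k a b) -
          of_real (1 / (real d + 1)) * (\<Sum>j\<le>d. \<Sum>k<d. Proj d j k a b)"
        unfolding pp_def by (simp add: algebra_simps sum_subtractf sum_distrib_left)
      also have "(\<Sum>j\<le>d. \<Sum>k<d. Proj d j k a b) = of_nat (d + 1) * (if a = b then 1 else 0)"
        using sumk_Proj[OF d _ a b] by simp
      also have "(\<Sum>j\<le>d. \<Sum>k<d. pp d phi j k * Proj d j k a b) =
          (\<Sum>j<d. \<Sum>k<d. pp d phi j k * Proj d j k a b) + (\<Sum>k<d. pp d phi d k * Proj d d k a b)"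
        by (simp add: lessThan_Suc_atMost[symmetric])
      also have "(\<Sum>j<d. \<Sum>k<d. pp d phi j k * Proj d j k a b) = (if a = b then 1 else cnj (phi b) * phi a)"
        using sumj_pp_Proj[OF d a b] eval_cond[OF d a b unit] by simp
      also have "(\<Sum>k<d. pp d phi d k * Proj d d k a b) = (\<Sum>k<d. if k = a then (if b = a then cnj (phi a) * phi a else 0) else 0)"
        by (intro sum.cong refl) (auto simp: pp_d Proj_def outer_def restr_def)
      also have "\<dots> = (if b = a then cnj (phi a) * phi a else 0)"
        using a by (simp add: sum_delta_lt)
      finally have F: "(\<Sum>j\<le>d. \<Sum>k<d. (inner d phi (mat_vec d (Proj d j k) phi) - 1 / (real d + 1)) * Proj d j k a b)
         = (if a = b then 1 else cnj (phi b) * phi a) + (if b = a then cnj (phi a) * phi a else 0)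
           - of_real (1 / (real d + 1)) * (of_nat (d + 1) * (if a = b then 1 else 0))" .
      have c1: "complex_of_real (1 / (real d + 1)) * of_nat (d + 1) = 1"
      proof -
        have rr: "real d + 1 = real (d + 1)" by simp
        have "complex_of_real (1 / (real d + 1)) * of_nat (d + 1) = complex_of_real (1 / (real d + 1) * (real d + 1))"
          by (simp only: of_real_mult rr of_real_of_nat_eq)
        also have "\<dots> = 1"
        proof -
          have "1 / (real d + 1) * (real d + 1) = 1" by (simp add: field_simps)
          then show ?thesis by (metis of_real_1)
        qed
        finally show ?thesis .
      qed
      have "outer d phi phi a b = phi a * cnj (phi b)" using True by (simp add: outer_def restr_def)
      have nz: "complex_of_nat d + 1 \<noteq> 0"
      proof -
        have "complex_of_nat d + 1 = of_nat (Suc d)" by simp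
        also have "\<dots> \<noteq> 0" by (rule of_nat_neq_0)
        finally show ?thesis .
      qed
      have c2: "(1 + complex_of_nat d) / (complex_of_nat d + 1) = 1"
        using nz by (simp add: add.commute)
      show ?thesis unfolding F
        by (cases "a = b") (use True in \<open>simp_all add: c2 mult.commute nz outer_def restr_def\<close>)
    qed
  qed
  show ?thesis
    using al part3 unfolding pp_def by auto
qed

end
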